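(* Let $N\ge1$, $M\in\mathbb{N}^*$, $p\in[1,\infty)$, and let $(u_k)_{k\ge1}$ be a sequence of nonnegative numbers. Let $\psi\in C^\infty_c(\mathbb{R})$ be a function which is not a polynomial of degree at most $M-1$ and with $\mathrm{supp}(\psi)\subset[-\eta,\eta]$ for some $\eta\ge1$, and set \[f(x_1,\dots,x_N)=\sum_{k\ge1}u_k\,\psi\!\left(\frac{x_1-2(M+\eta)k}{2^{-k}}\right)\cdots\psi\!\left(\frac{x_N-2(M+\eta)k}{2^{-k}}\right).\] Then there is a constant $c>0$ depending only on $N$, $p$, $M$ and $\psi$ such that for every $j\ge1$, \[\sup_{2^{-(j+1)}\le|h|\le2^{-j}}\|\Delta_h^Mf\|_{L^p(\mathbb{R}^N)}\ge c\,u_j\,2^{-jN/p}.\]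
   Context: $\Delta_h^Mf(x):=\sum_{j=0}^M(-1)^{M-j}\binom{M}{j}f(x+jh)$ for $x,h\in\mathbb{R}^N$. *)

theory Defs
  imports "HOL-Analysis.Analysis" "HOL-Computational_Algebra.Polynomial"
begin

definition smooth_real :: "(real \<Rightarrow> real) \<Rightarrow> bool" where
  "smooth_real g \<longleftrightarrow> (\<forall>n x. ((deriv ^^ n) g) differentiable (at x))"

definition fdiff :: "nat \<Rightarrow> 'a::real_vector \<Rightarrow> ('a \<Rightarrow> real) \<Rightarrow> 'a \<Rightarrow> real" where
  "fdiff M h f x = (\<Sum>j=0..M. (-1) ^ (M - j) * real (M choose j) * f (x + real j *\<^sub>R h))"

definition Lp_norm :: "real \<Rightarrow> ('a::euclidean_space \<Rightarrow> real) \<Rightarrow> ennreal" where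
  "Lp_norm p g = (let I = (\<integral>\<^sup>+ x. ennreal (\<bar>g x\<bar> powr p) \<partial>lebesgue) in
     if I = \<infinity> then \<infinity> else ennreal ((enn2real I) powr (1 / p)))"

text \<open>The function f of the statement (sum over k \<ge> 1, written with index Suc k).\<close>
definition fsum :: "nat \<Rightarrow> real \<Rightarrow> (real \<Rightarrow> real) \<Rightarrow> (nat \<Rightarrow> real) \<Rightarrow> real ^ 'n \<Rightarrow> real" where
  "fsum M \<eta> \<psi> u x = (\<Sum>k. u (Suc k) *
      (\<Prod>i\<in>UNIV. \<psi> ((x $ i - 2 * (real M + \<eta>) * real (Suc k)) / 2 powr (- real (Suc k)))))"

end

theory Submission
  imports Defs
begin

lemma diff_nonzero:
  fixes \<psi> :: "real \<Rightarrow> real" and \<eta> :: real and M :: nat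
  assumes supp: "\<forall>x. \<psi> x \<noteq> 0 \<longrightarrow> x \<in> {-\<eta>..\<eta>}" and nz: "\<psi> s0 \<noteq> 0"
  shows "\<exists>t. (\<Sum>l=0..M. (-1) ^ (M - l) * real (M choose l) * \<psi> (t + real l)) \<noteq> 0"
proof (rule ccontr)
  assume "\<not> ?thesis"
  hence H: "\<And>t. (\<Sum>l=0..M. (-1) ^ (M - l) * real (M choose l) * \<psi> (t + real l)) = 0" by auto
  have step: "\<psi> (x + real M) = 0" if "\<And>l. l < M \<Longrightarrow> \<psi> (x + real l) = 0" for x
  proof -
    have "{0..M} = insert M {0..<M}" by auto
    hence "(\<Sum>l=0..M. (-1) ^ (M - l) * real (M choose l) * \<psi> (x + real l))
        = \<psi> (x + real M) + (\<Sum>l=0..<M. (-1) ^ (M - l) * real (M choose l) * \<psi> (x + real l))"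
      by simp
    also have "(\<Sum>l=0..<M. (-1) ^ (M - l) * real (M choose l) * \<psi> (x + real l)) = 0"
      using that by (intro sum.neutral) auto
    finally show ?thesis using H[of x] by simp
  qed
  have zw: "\<psi> (w + real n) = 0" if w: "w < -\<eta> - real M" for w n
  proof (induction n rule: less_induct)
    case (less n)
    show ?case
    proof (cases "n < M")
      case True
      hence "w + real n < -\<eta>" using w by simp
      thus ?thesis using supp by force
    next
      case False
      have "\<psi> ((w + real (n - M)) + real M) = 0"
      proof (rule step)
        fix l assume "l < M"
        hence "n - M + l < n" using False by simp
        from less[OF this] show "\<psi> (w + real (n - M) + real l) = 0" by (simp add: add.assoc)
      qed
      moreover have "w + real (n - M) + real M = w + real n" using False by simp
      ultimately show ?thesis by simp
    qed
  qed
  have "\<psi> z = 0" for z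
  proof -
    define K where "K = nat \<lceil>z + \<eta> + real M\<rceil> + 1"
    have "real K > z + \<eta> + real M" unfolding K_def by linarith
    hence "z - real K < -\<eta> - real M" by simp
    from zw[OF this, of K] show ?thesis by simp
  qed
  with nz show False by simp
qed

lemma abs_aux: "(2*(m+n)::real) \<le> \<bar>A\<bar> \<Longrightarrow> \<bar>e\<bar> \<le> (n + 2*m + 1)/2 \<Longrightarrow> 1 \<le> n \<Longrightarrow> 1 \<le> m \<Longrightarrow> n < \<bar>A + e\<bar>"
  by (simp add: abs_if split: if_split_asm)

lemma fsum_eval:
  fixes x :: "real ^ 'n"
  assumes j: "j \<ge> 1"
    and van: "\<And>k. k \<ge> 1 \<Longrightarrow> k \<noteq> j \<Longrightarrow> \<exists>i. \<psi> ((x $ i - 2 * (real M + \<eta>) * real k) / 2 powr (- real k)) = 0"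
  shows "fsum M \<eta> \<psi> u x = u j * (\<Prod>i\<in>UNIV. \<psi> ((x $ i - 2 * (real M + \<eta>) * real j) / 2 powr (- real j)))"
proof -
  define F where "F k = u (Suc k) *
      (\<Prod>i\<in>UNIV. \<psi> ((x $ i - 2 * (real M + \<eta>) * real (Suc k)) / 2 powr (- real (Suc k))))" for k
  have "F = (\<lambda>k. if k = j - 1 then F k else 0)"
  proof
    fix k show "F k = (if k = j - 1 then F k else 0)"
    proof (cases "k = j - 1")
      case False
      hence "Suc k \<noteq> j" using j by auto
      from van[OF _ this] obtain i where zi: "\<psi> ((x $ i - 2 * (real M + \<eta>) * real (Suc k)) / 2 powr (- real (Suc k))) = 0"
        by auto
      hence "F k = 0" unfolding F_def using zi by (auto intro!: prod_zero)
      thus ?thesis using False by simp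
    qed simp
  qed
  hence "F sums F (j - 1)" using sums_single[of "j - 1" F] by simp
  hence "suminf F = F (j - 1)" by (rule sums_unique[symmetric])
  moreover have "Suc (j - 1) = j" using j by simp
  ultimately show ?thesis unfolding fsum_def F_def[abs_def] by simp
qed

lemma cube_meas: fixes c :: "real^'n" assumes "\<rho> > 0"
  shows "emeasure lebesgue (cbox (\<chi> i. c$i - \<rho>) (\<chi> i. c$i + \<rho>)) = ennreal ((2*\<rho>) ^ CARD('n))"
proof -
  have "c \<in> cbox (\<chi> i. c$i - \<rho>) (\<chi> i. c$i + \<rho>)" using assms by (simp add: mem_box_cart)
  hence ne: "cbox (\<chi> i. c$i - \<rho>) (\<chi> i. c$i + \<rho>) \<noteq> {}" by blast
  have "measure lborel (cbox (\<chi> i. c$i - \<rho>) (\<chi> i. c$i + \<rho>)) = (2*\<rho>) ^ CARD('n)"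
    using content_cbox_cart[OF ne] by simp
  moreover have "emeasure lebesgue (cbox (\<chi> i. c$i - \<rho>) (\<chi> i. c$i + \<rho>)) = ennreal (measure lborel (cbox (\<chi> i. c$i - \<rho>) (\<chi> i. c$i + \<rho>)))"
    by (simp add: emeasure_eq_measure2 emeasure_lborel_cbox_finite)
  ultimately show ?thesis by simp
qed

theorem lemma8p2:
  fixes M :: nat and p \<eta> :: real and \<psi> :: "real \<Rightarrow> real"
  assumes "M \<ge> 1" and "p \<ge> 1" and "\<eta> \<ge> 1"
    and "smooth_real \<psi>"
    and "\<forall>x. \<psi> x \<noteq> 0 \<longrightarrow> x \<in> {-\<eta>..\<eta>}"
    and "\<not> (\<exists>q :: real poly. degree q \<le> M - 1 \<and> \<psi> = poly q)"
  shows "\<exists>c > 0. \<forall>u :: nat \<Rightarrow> real. (\<forall>k. u k \<ge> 0) \<longrightarrow>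
           (\<forall>j \<ge> 1. (SUP h \<in> {h :: real ^ 'n. 2 powr (- real (j + 1)) \<le> norm h \<and> norm h \<le> 2 powr (- real j)}.
                       Lp_norm p (fdiff M h (fsum M \<eta> \<psi> u)))
                     \<ge> ennreal (c * u j * 2 powr (- real j * real CARD('n) / p)))"
proof -
  note supp = assms(5)
  have cont: "continuous_on UNIV \<psi>"
  proof -
    have "\<psi> differentiable (at x)" for x
      using assms(4) unfolding smooth_real_def by (metis funpow_0)
    thus ?thesis by (simp add: continuous_at_imp_continuous_on differentiable_imp_continuous_within)
  qed
  obtain s0 where s0: "\<psi> s0 \<noteq> 0"
  proof -
    have "\<not> (\<forall>z. \<psi> z = 0)"
    proof
      assume "\<forall>z. \<psi> z = 0"
      hence "\<psi> = poly 0" by auto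
      thus False using assms(6) by (metis degree_0 zero_le)
    qed
    thus ?thesis using that by auto
  qed
  define D where "D t = (\<Sum>l=0..M. (-1) ^ (M - l) * real (M choose l) * \<psi> (t + real l))" for t
  obtain t0 where t0: "D t0 \<noteq> 0" using diff_nonzero[OF supp s0, of M] unfolding D_def by auto
  have t0b: "\<bar>t0\<bar> \<le> \<eta> + real M"
  proof -
    obtain l where l: "l \<in> {0..M}" "\<psi> (t0 + real l) \<noteq> 0"
      using t0 unfolding D_def by (metis (no_types, lifting) mult_zero_right sum.neutral)
    hence "t0 + real l \<in> {-\<eta>..\<eta>}" using supp by blast
    thus ?thesis using l(1) by auto
  qed
  define i0 :: 'n where "i0 = undefined"
  define y0 :: "real ^ 'n" where "y0 = (\<chi> i. if i = i0 then t0 else s0)"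
  define G :: "real ^ 'n \<Rightarrow> real" where
    "G y = (\<Sum>l=0..M. (-1) ^ (M - l) * real (M choose l) * (\<Prod>i\<in>UNIV. \<psi> (y $ i + (if i = i0 then real l else 0))))" for y
  have Gy0: "G y0 = D t0 * \<psi> s0 ^ card (UNIV - {i0})"
  proof -
    have "(\<Prod>i\<in>UNIV. \<psi> (y0 $ i + (if i = i0 then real l else 0))) = \<psi> (t0 + real l) * \<psi> s0 ^ card (UNIV - {i0})" for l
    proof -
      have "(\<Prod>i\<in>UNIV. \<psi> (y0 $ i + (if i = i0 then real l else 0)))
          = \<psi> (y0 $ i0 + real l) * (\<Prod>i\<in>UNIV - {i0}. \<psi> (y0 $ i + (if i = i0 then real l else 0)))"
        by (subst prod.remove[of UNIV i0]) auto
      also have "(\<Prod>i\<in>UNIV - {i0}. \<psi> (y0 $ i + (if i = i0 then real l else 0))) = (\<Prod>i\<in>UNIV - {i0}. \<psi> s0)"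
        by (rule prod.cong) (auto simp: y0_def)
      finally show ?thesis by (simp add: y0_def)
    qed
    thus ?thesis unfolding G_def D_def by (simp add: sum_distrib_right mult.assoc)
  qed
  have Gnz: "G y0 \<noteq> 0" using Gy0 t0 s0 by simp
  have Gcont: "continuous_on UNIV G"
  proof -
    have "continuous_on UNIV (\<lambda>x::real^'n. \<psi> (x $ i + d))" for i d
      by (rule continuous_on_compose2[OF cont]) (auto intro!: continuous_intros)
    thus ?thesis unfolding G_def by (intro continuous_intros) auto
  qed
  define \<delta> where "\<delta> = \<bar>G y0\<bar> / 2"
  have \<delta>pos: "\<delta> > 0" using Gnz by (simp add: \<delta>_def)
  obtain \<epsilon> where \<epsilon>: "\<epsilon> > 0" "\<And>y. dist y y0 < \<epsilon> \<Longrightarrow> dist (G y) (G y0) < \<delta>"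
    using Gcont \<delta>pos unfolding continuous_on_iff by (metis UNIV_I)
  define r where "r = min 1 (\<epsilon> / (2 * real CARD('n)))"
  have rpos: "r > 0" and r1: "r \<le> 1" using \<epsilon> by (auto simp: r_def)
  have Gcube: "\<bar>G y\<bar> \<ge> \<delta>" if y: "\<And>i. \<bar>y $ i - y0 $ i\<bar> \<le> r" for y
  proof -
    have "dist y y0 \<le> (\<Sum>i\<in>UNIV. \<bar>(y - y0) $ i\<bar>)" using norm_le_l1_cart[of "y - y0"] by (simp add: dist_norm)
    also have "\<dots> \<le> (\<Sum>i\<in>(UNIV::'n set). r)" using y by (intro sum_mono) simp
    also have "\<dots> = real CARD('n) * r" by simp
    also have "\<dots> \<le> real CARD('n) * (\<epsilon> / (2 * real CARD('n)))"
      by (intro mult_left_mono) (auto simp: r_def)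
    also have "\<dots> < \<epsilon>" using \<epsilon>(1) by simp
    finally have "dist (G y) (G y0) < \<delta>" by (rule \<epsilon>(2))
    thus ?thesis unfolding \<delta>_def dist_real_def by linarith
  qed
  define c where "c = \<delta> * (2 * r) powr (real CARD('n) / p)"
  have cpos: "c > 0" using \<delta>pos rpos by (simp add: c_def)
  show ?thesis
  proof (intro exI[of _ c] conjI cpos allI impI)
    fix u :: "nat \<Rightarrow> real" and j :: nat
    assume u: "\<forall>k. u k \<ge> 0" and j: "j \<ge> 1"
    define q where "q = (2::real) powr (- real j)"
    have qpos: "q > 0" and qhalf: "q \<le> 1/2"
    proof -
      show "q > 0" by (simp add: q_def)
      have "q \<le> 2 powr (-1)" unfolding q_def using j by (intro powr_mono) auto
      thus "q \<le> 1/2" by (simp add: powr_minus)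
    qed
    define a where "a = 2 * (real M + \<eta>) * real j"
    define \<rho> where "\<rho> = r * q"
    have \<rho>pos: "\<rho> > 0" using rpos qpos by (simp add: \<rho>_def)
    define cen :: "real ^ 'n" where "cen = (\<chi> i. a + q * y0 $ i)"
    define S where "S = cbox (\<chi> i. cen$i - \<rho>) (\<chi> i. cen$i + \<rho>)"
    define h :: "real ^ 'n" where "h = q *\<^sub>R axis i0 1"
    define f :: "real ^ 'n \<Rightarrow> real" where "f = fsum M \<eta> \<psi> u"
    have hset: "h \<in> {h :: real ^ 'n. 2 powr (- real (j + 1)) \<le> norm h \<and> norm h \<le> 2 powr (- real j)}"
    proof -
      have "norm h = q" using qpos by (simp add: h_def)
      moreover have "2 powr (- real (j + 1)) \<le> q" unfolding q_def by (intro powr_mono) auto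
      ultimately show ?thesis by (simp add: q_def)
    qed
    have key: "\<bar>fdiff M h f x\<bar> \<ge> u j * \<delta>" if xS: "x \<in> S" for x
    proof -
      define y :: "real ^ 'n" where "y = (\<chi> i. (x $ i - a) / q)"
      have xi: "x $ i = a + q * y $ i" for i using qpos by (simp add: y_def)
      have ycl: "\<bar>y $ i - y0 $ i\<bar> \<le> r" for i
      proof -
        have "\<bar>x $ i - cen $ i\<bar> \<le> \<rho>" using xS unfolding S_def mem_box_cart by (simp add: abs_le_iff) (metis add.commute diff_le_eq le_diff_eq)
        hence "\<bar>q * (y $ i - y0 $ i)\<bar> \<le> q * r" by (simp add: xi cen_def \<rho>_def algebra_simps)
        thus ?thesis using qpos by (simp add: abs_mult)
      qed
      have yi0: "\<bar>y $ i0\<bar> \<le> \<eta> + real M + 1"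
        using ycl[of i0] t0b r1 by (simp add: y0_def)
      have fval: "f (x + real l *\<^sub>R h) = u j * (\<Prod>i\<in>UNIV. \<psi> (y $ i + (if i = i0 then real l else 0)))"
        if l: "l \<le> M" for l
      proof -
        have comp: "(x + real l *\<^sub>R h) $ i = a + q * (y $ i + (if i = i0 then real l else 0))" for i
          by (simp add: xi h_def axis_def algebra_simps)
        have "f (x + real l *\<^sub>R h) = u j * (\<Prod>i\<in>UNIV. \<psi> (((x + real l *\<^sub>R h) $ i - 2 * (real M + \<eta>) * real j) / 2 powr (- real j)))"
          unfolding f_def
        proof (rule fsum_eval[OF j])
          fix k assume k: "k \<ge> 1" "k \<noteq> j"
          define e where "e = q * (y $ i0 + real l)"
          have "\<bar>e\<bar> \<le> q * (\<eta> + 2 * real M + 1)"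
          proof -
            have "\<bar>y $ i0 + real l\<bar> \<le> \<eta> + 2 * real M + 1" using yi0 l by linarith
            thus ?thesis unfolding e_def abs_mult using qpos by (simp add: mult_left_mono)
          qed
          also have "\<dots> \<le> (1/2) * (\<eta> + 2 * real M + 1)"
            using qhalf assms(3) by (intro mult_right_mono) auto
          finally have eb: "\<bar>e\<bar> \<le> (\<eta> + 2 * real M + 1) / 2" by simp
          have "\<bar>real j - real k\<bar> \<ge> 1" using k by linarith
          hence "\<bar>a - 2 * (real M + \<eta>) * real k\<bar> \<ge> 2 * (real M + \<eta>)"
            unfolding a_def using assms(3)
            by (simp add: abs_mult right_diff_distrib[symmetric])
          moreover have "(x + real l *\<^sub>R h) $ i0 - 2 * (real M + \<eta>) * real k
              = (a - 2 * (real M + \<eta>) * real k) + e"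
            unfolding comp e_def by (simp add: algebra_simps)
          ultimately have zb: "\<bar>(x + real l *\<^sub>R h) $ i0 - 2 * (real M + \<eta>) * real k\<bar> > \<eta>"
            using abs_aux[of "real M" \<eta> "a - 2 * (real M + \<eta>) * real k" e] eb assms(3) \<open>M \<ge> 1\<close> by simp
          have w1: "(2::real) powr (- real k) \<le> 1" using powr_mono[of "- real k" 0 2] by simp
          have w0: "(2::real) powr (- real k) > 0" by simp
          define z where "z = (x + real l *\<^sub>R h) $ i0 - 2 * (real M + \<eta>) * real k"
          have "\<bar>z\<bar> \<le> \<bar>z / 2 powr (- real k)\<bar>"
            using w0 w1 by (simp add: abs_divide le_divide_eq mult_left_le)
          hence "\<bar>z / 2 powr (- real k)\<bar> > \<eta>" using zb unfolding z_def by linarith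
          hence "\<psi> (z / 2 powr (- real k)) = 0" using supp by force
          thus "\<exists>i. \<psi> (((x + real l *\<^sub>R h) $ i - 2 * (real M + \<eta>) * real k) / 2 powr (- real k)) = 0"
            unfolding z_def by blast
        qed
        also have "(\<Prod>i\<in>UNIV. \<psi> (((x + real l *\<^sub>R h) $ i - 2 * (real M + \<eta>) * real j) / 2 powr (- real j)))
            = (\<Prod>i\<in>UNIV. \<psi> (y $ i + (if i = i0 then real l else 0)))"
        proof (rule prod.cong[OF refl])
          fix i
          have "((x + real l *\<^sub>R h) $ i - 2 * (real M + \<eta>) * real j) / 2 powr (- real j)
              = (q * (y $ i + (if i = i0 then real l else 0))) / q"
            unfolding comp a_def q_def by simp
          also have "\<dots> = y $ i + (if i = i0 then real l else 0)" using qpos by simp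
          finally show "\<psi> (((x + real l *\<^sub>R h) $ i - 2 * (real M + \<eta>) * real j) / 2 powr (- real j))
              = \<psi> (y $ i + (if i = i0 then real l else 0))" by simp
        qed
        finally show ?thesis .
      qed
      have "fdiff M h f x = u j * G y"
        unfolding fdiff_def G_def sum_distrib_left
        by (rule sum.cong[OF refl]) (simp add: fval)
      moreover have "\<bar>G y\<bar> \<ge> \<delta>" using Gcube ycl by blast
      ultimately show ?thesis using u by (simp add: abs_mult mult_left_mono)
    qed
    define X where "X = c * u j * 2 powr (- real j * real CARD('n) / p)"
    have X0: "X \<ge> 0" using u cpos by (simp add: X_def)
    define I where "I = (\<integral>\<^sup>+ x. ennreal (\<bar>fdiff M h f x\<bar> powr p) \<partial>lebesgue)"
    have Smeas: "S \<in> sets lebesgue" unfolding S_def by (simp add: fmeasurableD)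
    have "(\<integral>\<^sup>+ x. ennreal ((u j * \<delta>) powr p) * indicator S x \<partial>lebesgue) \<le> I"
      unfolding I_def
    proof (rule nn_integral_mono)
      fix x
      show "ennreal ((u j * \<delta>) powr p) * indicator S x \<le> ennreal (\<bar>fdiff M h f x\<bar> powr p)"
      proof (cases "x \<in> S")
        case True
        have "(u j * \<delta>) powr p \<le> \<bar>fdiff M h f x\<bar> powr p"
          using key[OF True] u \<delta>pos assms(2) by (intro powr_mono2) auto
        thus ?thesis using True by (simp add: ennreal_leI)
      qed simp
    qed
    moreover have "(\<integral>\<^sup>+ x. ennreal ((u j * \<delta>) powr p) * indicator S x \<partial>lebesgue)
        = ennreal ((u j * \<delta>) powr p) * ennreal ((2 * \<rho>) ^ CARD('n))"
      using nn_integral_cmult_indicator[OF Smeas] cube_meas[OF \<rho>pos, of cen] unfolding S_def by simp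
    moreover have "(u j * \<delta>) powr p * (2 * \<rho>) ^ CARD('n) = X powr p"
    proof -
      have "2 powr (- real j * real CARD('n) / p) = q powr (real CARD('n) / p)"
        unfolding q_def by (simp add: powr_powr)
      hence "X = (u j * \<delta>) * ((2 * r) powr (real CARD('n) / p) * q powr (real CARD('n) / p))"
        by (simp add: X_def c_def)
      also have "\<dots> = (u j * \<delta>) * (2 * \<rho>) powr (real CARD('n) / p)"
        using rpos qpos by (simp add: powr_mult \<rho>_def mult.assoc)
      finally have "X powr p = (u j * \<delta>) powr p * ((2 * \<rho>) powr (real CARD('n) / p)) powr p"
        using u \<delta>pos by (simp add: powr_mult)
      also have "((2 * \<rho>) powr (real CARD('n) / p)) powr p = (2 * \<rho>) ^ CARD('n)"
        using assms(2) \<rho>pos by (simp add: powr_powr powr_realpow)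
      finally show ?thesis by simp
    qed
    ultimately have Ib: "ennreal (X powr p) \<le> I"
      using u \<delta>pos by (simp add: ennreal_mult'[symmetric])
    have "ennreal X \<le> Lp_norm p (fdiff M h f)"
    proof (cases "I = \<infinity>")
      case True thus ?thesis unfolding Lp_norm_def I_def[symmetric] by simp
    next
      case False
      hence "I = ennreal (enn2real I)" by (simp add: less_top)
      with Ib have "X powr p \<le> enn2real I"
        by (metis ennreal_le_iff enn2real_nonneg)
      hence "(X powr p) powr (1 / p) \<le> enn2real I powr (1 / p)"
        using assms(2) by (intro powr_mono2) auto
      moreover have "(X powr p) powr (1 / p) = X" using assms(2) X0 by (simp add: powr_powr)
      ultimately show ?thesis using False unfolding Lp_norm_def I_def[symmetric] by (simp add: ennreal_leI)
    qed
    also have "\<dots> \<le> (SUP h \<in> {h :: real ^ 'n. 2 powr (- real (j + 1)) \<le> norm h \<and> norm h \<le> 2 powr (- real j)}.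
                       Lp_norm p (fdiff M h f))"
      by (rule SUP_upper[OF hset])
    finally show "ennreal (c * u j * 2 powr (- real j * real CARD('n) / p)) \<le> (SUP h \<in> {h :: real ^ 'n. 2 powr (- real (j + 1)) \<le> norm h \<and> norm h \<le> 2 powr (- real j)}.
                       Lp_norm p (fdiff M h (fsum M \<eta> \<psi> u)))" unfolding X_def f_def .
  qed
qed

end
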